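(* Let $P$ and $Q$ be face posets of $d$-dimensional convex polytopes, with maximum elements $\hat 1^P,\hat 1^Q$, and let $R$ be the face poset of a $(d-1)$-dimensional convex polytope, with maximum element $\hat 1^R$. Suppose $F_P\in P$ and $F_Q\in Q$ are elements of rank $d-1$ and $\phi^P:R\to[\emptyset,F_P]$, $\phi^Q:R\to[\emptyset,F_Q]$ are rank-preserving poset isomorphisms. Define the poset $Gl=Gl(P,Q,R)$ with underlying set the disjoint union $$\bigl(P\setminus([\emptyset,F_P]\cup\{\hat 1^P\})\bigr)\ \sqcup\ \bigl(Q\setminus([\emptyset,F_Q]\cup\{\hat 1^Q\})\bigr)\ \sqcup\ \bigl(R\setminus\{\hat 1^R\}\bigr)\ \sqcup\ \{\hat 1\},$$ ranks inherited from $P,Q,R$ and $|\hat 1|=d$, and order: $\hat 1$ is above every element; two elements of the $P$-part (resp. $Q$-part, $R$-part) compare as in $P$ (resp. $Q$, $R$); for $a$ in the $P$-part and $r$ in the $R$-part, $a\le r$ iff $a\le_P\phi^P(r)$ and $r\le a$ iff $\phi^P(r)\le_P a$; likewise for the $Q$-part with $\phi^Q$; elements of the $P$-part and the $Q$-part are incomparable. Then $$\mathcal{M}_{Gl}(z)=\mathcal{M}_P(z)+\mathcal{M}_Q(z)-\mathcal{M}_R(z)-1+z-(1-z)\,g^R_{d-1}(z).$$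
   Context: The face poset of a convex polytope with vertex set $V$ is the set of vertex sets of its faces (including the whole polytope) together with $\emptyset$, ordered by inclusion, ranked by dimension ($|\emptyset|=-1$). $[a,b]=\{s:a\le s\le b\}$. (Geometrically, $Gl$ is the face poset of the polytope obtained by gluing the two polytopes along a common facet isomorphic to the polytope of $R$ and deleting that interior facet, assuming no faces merge.) The Möbius function $\mu$ is $\mu[p,p]=1$, $\mu[p,q]=-\sum_{p\le s<q}\mu[p,s]$ for $p<q$, $0$ if $p\not\le q$; $\mu_z[p,q]=\mu[p,q]z^{|q|-|p|}$; $\mathcal{M}_P(z)=\sum_{p\le q\in P}\mu_z[p,q]$; the top polynomial of $R$ (rank $d-1$) is $g^R_{d-1}(z)=\sum_{p\le q,\ |p|\le d-1\le|q|}\mu_z[p,q]$. *)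

theory Defs
  imports "HOL-Analysis.Analysis" "HOL-Computational_Algebra.Polynomial"
begin

definition vertex_set :: "'a::euclidean_space set \<Rightarrow> 'a set" where
  "vertex_set F = {v. v extreme_point_of F}"

text \<open>Face poset: vertex sets of all faces (including the empty face and the whole
  polytope), ordered by inclusion.\<close>
definition face_poset :: "'a::euclidean_space set \<Rightarrow> 'a set set" where
  "face_poset K = {vertex_set F | F. F face_of K}"

text \<open>Rank = dimension of the face spanned by the vertex set (so the empty set has rank -1).\<close>
definition face_rank :: "'a::euclidean_space set \<Rightarrow> int" where
  "face_rank p = aff_dim (convex hull p)"

definition mobius :: "'x set \<Rightarrow> ('x \<Rightarrow> 'x \<Rightarrow> bool) \<Rightarrow> 'x \<Rightarrow> 'x \<Rightarrow> int" where
  "mobius S le = (THE mu. \<forall>p q. mu p q =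
      (if p \<in> S \<and> q \<in> S \<and> le p q then
         (if p = q then 1 else - (\<Sum>s\<in>{s\<in>S. le p s \<and> le s q \<and> s \<noteq> q}. mu p s))
       else 0))"

definition mobius_z :: "'x set \<Rightarrow> ('x \<Rightarrow> 'x \<Rightarrow> bool) \<Rightarrow> ('x \<Rightarrow> int) \<Rightarrow> 'x \<Rightarrow> 'x \<Rightarrow> int poly" where
  "mobius_z S le rk p q = monom (mobius S le p q) (nat (rk q - rk p))"

definition mobius_poly :: "'x set \<Rightarrow> ('x \<Rightarrow> 'x \<Rightarrow> bool) \<Rightarrow> ('x \<Rightarrow> int) \<Rightarrow> int poly" where
  "mobius_poly S le rk =
     (\<Sum>(p,q)\<in>{(p,q). p \<in> S \<and> q \<in> S \<and> le p q}. mobius_z S le rk p q)"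

definition top_poly :: "'x set \<Rightarrow> ('x \<Rightarrow> 'x \<Rightarrow> bool) \<Rightarrow> ('x \<Rightarrow> int) \<Rightarrow> int \<Rightarrow> int poly" where
  "top_poly S le rk k =
     (\<Sum>(p,q)\<in>{(p,q). p \<in> S \<and> q \<in> S \<and> le p q \<and> rk p \<le> k \<and> k \<le> rk q}. mobius_z S le rk p q)"

datatype ('p, 'q, 'r) glel = GP 'p | GQ 'q | GR 'r | GTop

definition gl_carrier ::
  "'p set set \<Rightarrow> 'q set set \<Rightarrow> 'r set set \<Rightarrow> 'p set \<Rightarrow> 'q set \<Rightarrow>
   'p set \<Rightarrow> 'q set \<Rightarrow> 'r set \<Rightarrow> ('p set, 'q set, 'r set) glel set" where
  "gl_carrier P Q R FP FQ topP topQ topR =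
     GP ` (P - ({s\<in>P. s \<subseteq> FP} \<union> {topP})) \<union>
     GQ ` (Q - ({s\<in>Q. s \<subseteq> FQ} \<union> {topQ})) \<union>
     GR ` (R - {topR}) \<union> {GTop}"

fun gl_le ::
  "('r set \<Rightarrow> 'p set) \<Rightarrow> ('r set \<Rightarrow> 'q set) \<Rightarrow>
   ('p set, 'q set, 'r set) glel \<Rightarrow> ('p set, 'q set, 'r set) glel \<Rightarrow> bool" where
  "gl_le phiP phiQ _ GTop = True"
| "gl_le phiP phiQ GTop _ = False"
| "gl_le phiP phiQ (GP a) (GP b) = (a \<subseteq> b)"
| "gl_le phiP phiQ (GQ a) (GQ b) = (a \<subseteq> b)"
| "gl_le phiP phiQ (GR r) (GR s) = (r \<subseteq> s)"
| "gl_le phiP phiQ (GP a) (GR r) = (a \<subseteq> phiP r)"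
| "gl_le phiP phiQ (GR r) (GP a) = (phiP r \<subseteq> a)"
| "gl_le phiP phiQ (GQ a) (GR r) = (a \<subseteq> phiQ r)"
| "gl_le phiP phiQ (GR r) (GQ a) = (phiQ r \<subseteq> a)"
| "gl_le phiP phiQ (GP a) (GQ b) = False"
| "gl_le phiP phiQ (GQ a) (GP b) = False"

fun gl_rank :: "nat \<Rightarrow> ('p::euclidean_space set, 'q::euclidean_space set, 'r::euclidean_space set) glel \<Rightarrow> int" where
  "gl_rank d (GP a) = face_rank a"
| "gl_rank d (GQ a) = face_rank a"
| "gl_rank d (GR r) = face_rank r"
| "gl_rank d GTop = int d"

end

theory Submission
  imports Defs
begin


definition po_on :: "'x set \<Rightarrow> ('x \<Rightarrow> 'x \<Rightarrow> bool) \<Rightarrow> bool" where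
  "po_on S le \<longleftrightarrow> (\<forall>x\<in>S. le x x) \<and> (\<forall>x\<in>S. \<forall>y\<in>S. le x y \<longrightarrow> le y x \<longrightarrow> x = y)
     \<and> (\<forall>x\<in>S. \<forall>y\<in>S. \<forall>z\<in>S. le x y \<longrightarrow> le y z \<longrightarrow> le x z)"

definition mobeq :: "'x set \<Rightarrow> ('x \<Rightarrow> 'x \<Rightarrow> bool) \<Rightarrow> ('x \<Rightarrow> 'x \<Rightarrow> int) \<Rightarrow> bool" where
  "mobeq S le mu \<longleftrightarrow> (\<forall>p q. mu p q =
      (if p \<in> S \<and> q \<in> S \<and> le p q then
         (if p = q then 1 else - (\<Sum>s\<in>{s\<in>S. le p s \<and> le s q \<and> s \<noteq> q}. mu p s))
       else 0))"

lemma po_refl: "po_on S le \<Longrightarrow> x \<in> S \<Longrightarrow> le x x"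
  unfolding po_on_def by blast
lemma po_antisym: "po_on S le \<Longrightarrow> x \<in> S \<Longrightarrow> y \<in> S \<Longrightarrow> le x y \<Longrightarrow> le y x \<Longrightarrow> x = y"
  unfolding po_on_def by blast
lemma po_trans: "po_on S le \<Longrightarrow> x \<in> S \<Longrightarrow> y \<in> S \<Longrightarrow> z \<in> S \<Longrightarrow> le x y \<Longrightarrow> le y z \<Longrightarrow> le x z"
  unfolding po_on_def by blast

lemma mobius_alt: "mobius S le = (THE mu. mobeq S le mu)"
  unfolding mobius_def mobeq_def by simp

fun mitr :: "'x set \<Rightarrow> ('x \<Rightarrow> 'x \<Rightarrow> bool) \<Rightarrow> nat \<Rightarrow> 'x \<Rightarrow> 'x \<Rightarrow> int" where
  "mitr S le 0 p q = 0"
| "mitr S le (Suc n) p q = (if p \<in> S \<and> q \<in> S \<and> le p q then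
         (if p = q then 1 else - (\<Sum>s\<in>{s\<in>S. le p s \<and> le s q \<and> s \<noteq> q}. mitr S le n p s))
       else 0)"

definition hgt :: "'x set \<Rightarrow> ('x \<Rightarrow> 'x \<Rightarrow> bool) \<Rightarrow> 'x \<Rightarrow> nat" where
  "hgt S le q = card {t\<in>S. le t q}"

lemma hgt_less:
  assumes "finite S" "po_on S le" "s \<in> S" "q \<in> S" "le s q" "s \<noteq> q"
  shows "hgt S le s < hgt S le q"
  unfolding hgt_def
proof (rule psubset_card_mono)
  show "finite {t \<in> S. le t q}" using assms(1) by simp
  show "{t \<in> S. le t s} \<subset> {t \<in> S. le t q}"
    using assms unfolding po_on_def by blast
qed

lemma hgt_pos: "finite S \<Longrightarrow> po_on S le \<Longrightarrow> q \<in> S \<Longrightarrow> hgt S le q > 0"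
proof -
  assume a: "finite S" "po_on S le" "q \<in> S"
  then have "le q q" unfolding po_on_def by blast
  then have "q \<in> {t\<in>S. le t q}" using a by blast
  then show ?thesis unfolding hgt_def using a(1) by (subst card_gt_0_iff) auto
qed

lemma hgt_le: "finite S \<Longrightarrow> hgt S le q \<le> card S"
  unfolding hgt_def by (rule card_mono) auto

lemma mitr_stable:
  assumes fin: "finite S" and po: "po_on S le"
  shows "hgt S le q \<le> n \<Longrightarrow> hgt S le q \<le> m \<Longrightarrow> mitr S le n p q = mitr S le m p q"
proof (induction "hgt S le q" arbitrary: q n m rule: less_induct)
  case less
  show ?case
  proof (cases "p \<in> S \<and> q \<in> S \<and> le p q")
    case False
    then show ?thesis by (cases n; cases m; simp only: mitr.simps if_False)
  next
    case True
    have "hgt S le q > 0" using hgt_pos[OF fin po] True by blast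
    then obtain n' m' where nm: "n = Suc n'" "m = Suc m'"
      using less.prems by (cases n; cases m; auto)
    have "mitr S le n' p s = mitr S le m' p s" if "s \<in> {s\<in>S. le p s \<and> le s q \<and> s \<noteq> q}" for s
    proof -
      have "hgt S le s < hgt S le q" using hgt_less[OF fin po] that True by blast
      then show ?thesis using less nm by auto
    qed
    then show ?thesis using nm True by (auto intro!: sum.cong)
  qed
qed

lemma mobeq_unique:
  assumes fin: "finite S" and po: "po_on S le" and m1: "mobeq S le mu1" and m2: "mobeq S le mu2"
  shows "mu1 p q = mu2 p q"
proof (induction "hgt S le q" arbitrary: q rule: less_induct)
  case less
  show ?case
  proof (cases "q \<in> S")
    case True
    have "mu1 p s = mu2 p s" if "s \<in> {s\<in>S. le p s \<and> le s q \<and> s \<noteq> q}" for s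
    proof -
      have "hgt S le s < hgt S le q" using hgt_less[OF fin po, of s q] that True by auto
      then show ?thesis using less by blast
    qed
    then have "(\<Sum>s\<in>{s\<in>S. le p s \<and> le s q \<and> s \<noteq> q}. mu1 p s) = (\<Sum>s\<in>{s\<in>S. le p s \<and> le s q \<and> s \<noteq> q}. mu2 p s)"
      by (rule sum.cong[OF refl])
    moreover note e1 = m1[unfolded mobeq_def, rule_format, of p q]
    moreover note e2 = m2[unfolded mobeq_def, rule_format, of p q]
    ultimately show ?thesis by (simp only:)
  next
    case False
    note e1 = m1[unfolded mobeq_def, rule_format, of p q]
    note e2 = m2[unfolded mobeq_def, rule_format, of p q]
    show ?thesis using False by (simp only: e1 e2 simp_thms if_False)
  qed
qed

lemma mobeq_exists:
  assumes fin: "finite S" and po: "po_on S le"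
  shows "mobeq S le (mitr S le (Suc (card S)))"
  unfolding mobeq_def
proof (intro allI)
  fix p q
  have "mitr S le (card S) p s = mitr S le (Suc (card S)) p s" for s
    using mitr_stable[OF fin po] hgt_le[OF fin] by (meson le_SucI)
  then show "mitr S le (Suc (card S)) p q = (if p \<in> S \<and> q \<in> S \<and> le p q then
         (if p = q then 1 else - (\<Sum>s\<in>{s\<in>S. le p s \<and> le s q \<and> s \<noteq> q}. mitr S le (Suc (card S)) p s))
       else 0)" by simp
qed

lemma mobius_mobeq:
  assumes fin: "finite S" and po: "po_on S le"
  shows "mobeq S le (mobius S le)"
  unfolding mobius_alt
  by (rule theI[of "mobeq S le", OF mobeq_exists[OF fin po]]) (intro ext, rule mobeq_unique[OF fin po], assumption, rule mobeq_exists[OF fin po])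

lemma mobius_rec:
  assumes fin: "finite S" and po: "po_on S le"
  shows "mobius S le p q = (if p \<in> S \<and> q \<in> S \<and> le p q then
         (if p = q then 1 else - (\<Sum>s\<in>{s\<in>S. le p s \<and> le s q \<and> s \<noteq> q}. mobius S le p s))
       else 0)"
  using mobius_mobeq[OF fin po] unfolding mobeq_def by blast

lemma mobius_zero: "finite S \<Longrightarrow> po_on S le \<Longrightarrow> \<not> (p \<in> S \<and> q \<in> S \<and> le p q) \<Longrightarrow> mobius S le p q = 0"
proof -
  assume a: "finite S" "po_on S le" "\<not> (p \<in> S \<and> q \<in> S \<and> le p q)"
  then have c: "(p \<in> S \<and> q \<in> S \<and> le p q) = False" by blast
  show ?thesis using mobius_rec[OF a(1) a(2), of p q] unfolding c if_False .
qed

lemma mobius_refl: "finite S \<Longrightarrow> po_on S le \<Longrightarrow> p \<in> S \<Longrightarrow> mobius S le p p = 1"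
proof -
  assume a: "finite S" "po_on S le" "p \<in> S"
  then have c: "(p \<in> S \<and> p \<in> S \<and> le p p) = True" using po_refl[OF a(2) a(3)] by simp
  show ?thesis using mobius_rec[OF a(1) a(2), of p p] unfolding c if_True simp_thms(6) if_True .
qed

lemma mobius_sum_zero:
  assumes fin: "finite S" and po: "po_on S le" and pq: "p \<in> S" "q \<in> S" "le p q" "p \<noteq> q"
  shows "(\<Sum>s\<in>{s\<in>S. le s q}. mobius S le p s) = 0"
proof -
  have "(\<Sum>s\<in>{s\<in>S. le s q}. mobius S le p s) = (\<Sum>s\<in>{s\<in>S. le p s \<and> le s q}. mobius S le p s)"
    by (rule sum.mono_neutral_right) (use fin mobius_zero[OF fin po] in auto)
  also have "{s\<in>S. le p s \<and> le s q} = insert q {s\<in>S. le p s \<and> le s q \<and> s \<noteq> q}"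
    using pq po_refl[OF po, of q] by auto
  also have "(\<Sum>s\<in>\<dots>. mobius S le p s) = mobius S le p q + (\<Sum>s\<in>{s\<in>S. le p s \<and> le s q \<and> s \<noteq> q}. mobius S le p s)"
    by (rule sum.insert) (use fin in auto)
  also have "\<dots> = 0" using mobius_rec[OF fin po, of p q] pq by simp
  finally show ?thesis .
qed

lemma mobius_transfer:
  assumes finS: "finite S" and poS: "po_on S le" and finT: "finite T" and poT: "po_on T le'"
    and p: "p \<in> D" and DS: "D \<subseteq> {s\<in>S. le p s}"
    and Ddown: "\<forall>s\<in>D. \<forall>t\<in>S. le p t \<longrightarrow> le t s \<longrightarrow> t \<in> D"
    and DT: "D' \<subseteq> {s\<in>T. le' (f p) s}"
    and D'down: "\<forall>s\<in>D'. \<forall>t\<in>T. le' (f p) t \<longrightarrow> le' t s \<longrightarrow> t \<in> D'"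
    and bij: "bij_betw f D D'" and ord: "\<forall>x\<in>D. \<forall>y\<in>D. le' (f x) (f y) = le x y"
  shows "q \<in> D \<Longrightarrow> mobius T le' (f p) (f q) = mobius S le p q"
proof (induction "hgt S le q" arbitrary: q rule: less_induct)
  case less
  have qS: "q \<in> S" "le p q" using less.prems DS by auto
  have pS: "p \<in> S" using p DS by auto
  have fq: "f q \<in> D'" "f p \<in> D'" using bij less.prems p by (auto simp: bij_betw_def)
  have fqT: "f q \<in> T" "f p \<in> T" "le' (f p) (f q)" using fq DT by auto
  have inj: "inj_on f D" using bij by (auto simp: bij_betw_def)
  show ?case
  proof (cases "p = q")
    case True
    then show ?thesis using mobius_refl[OF finS poS pS] mobius_refl[OF finT poT fqT(2)] by simp
  next
    case False
    have fne: "f p \<noteq> f q" using inj False p less.prems by (auto simp: inj_on_def)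
    define A where "A = {s\<in>S. le p s \<and> le s q \<and> s \<noteq> q}"
    define B where "B = {s\<in>T. le' (f p) s \<and> le' s (f q) \<and> s \<noteq> f q}"
    have AD: "A \<subseteq> D" unfolding A_def using Ddown less.prems by blast
    have fAB: "f ` A = B"
    proof
      show "f ` A \<subseteq> B"
      proof
        fix t assume "t \<in> f ` A"
        then obtain s where s: "s \<in> A" "t = f s" by auto
        have "s \<in> D" using s AD by auto
        then have "f s \<in> D'" using bij by (auto simp: bij_betw_def)
        moreover have "le' (f p) (f s)" "le' (f s) (f q)" "f s \<noteq> f q"
          using ord p \<open>s \<in> D\<close> less.prems s inj unfolding A_def inj_on_def by auto
        ultimately show "t \<in> B" using s DT unfolding B_def by auto
      qed
    next
      show "B \<subseteq> f ` A"
      proof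
        fix t assume t: "t \<in> B"
        then have "t \<in> D'" using D'down fq unfolding B_def by blast
        then obtain s where s: "s \<in> D" "t = f s" using bij by (auto simp: bij_betw_def)
        then have "le p s" "le s q" "s \<noteq> q" using ord p less.prems t unfolding B_def by auto
        then show "t \<in> f ` A" using s DS unfolding A_def by auto
      qed
    qed
    have bAB: "bij_betw f A B" using fAB inj AD by (auto simp: bij_betw_def intro: inj_on_subset)
    have "(\<Sum>t\<in>B. mobius T le' (f p) t) = (\<Sum>s\<in>A. mobius T le' (f p) (f s))"
      by (rule sum.reindex_bij_betw[symmetric]) (rule bAB)
    also have "\<dots> = (\<Sum>s\<in>A. mobius S le p s)"
    proof (rule sum.cong)
      fix s assume s: "s \<in> A"
      have "hgt S le s < hgt S le q" using s hgt_less[OF finS poS] qS unfolding A_def by auto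
      then show "mobius T le' (f p) (f s) = mobius S le p s" using less s AD by auto
    qed simp
    finally show ?thesis
      using mobius_rec[OF finS poS, of p q] mobius_rec[OF finT poT, of "f p" "f q"] qS pS fqT False fne
      unfolding A_def B_def by simp
  qed
qed




lemma mobius_z_zero:
  "finite S \<Longrightarrow> po_on S le \<Longrightarrow> \<not> (p \<in> S \<and> q \<in> S \<and> le p q) \<Longrightarrow> mobius_z S le rk p q = 0"
  unfolding mobius_z_def using mobius_zero[of S le p q] by simp

lemma row_transfer:
  assumes finS: "finite S" and poS: "po_on S le" and finT: "finite T" and poT: "po_on T le'"
    and p: "p \<in> S"
    and bij: "bij_betw f {s\<in>S. le p s} {t\<in>T. le' (f p) t}"
    and ord: "\<forall>x\<in>{s\<in>S. le p s}. \<forall>y\<in>{s\<in>S. le p s}. le' (f x) (f y) = le x y"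
    and rk: "\<forall>q\<in>{s\<in>S. le p s}. rk' (f q) - rk' (f p) = rk q - rk p"
  shows "(\<Sum>q\<in>T. mobius_z T le' rk' (f p) q) = (\<Sum>q\<in>S. mobius_z S le rk p q)"
proof -
  have pD: "p \<in> {s\<in>S. le p s}" using p poS unfolding po_on_def by auto
  have tr: "mobius T le' (f p) (f q) = mobius S le p q" if "q \<in> {s\<in>S. le p s}" for q
    by (rule mobius_transfer[OF finS poS finT poT pD _ _ _ _ bij ord that]) auto
  have "(\<Sum>q\<in>T. mobius_z T le' rk' (f p) q) = (\<Sum>q\<in>{t\<in>T. le' (f p) t}. mobius_z T le' rk' (f p) q)"
    by (rule sum.mono_neutral_right) (use finT mobius_zero[OF finT poT] in \<open>auto simp: mobius_z_def\<close>)
  also have "\<dots> = (\<Sum>q\<in>{s\<in>S. le p s}. mobius_z T le' rk' (f p) (f q))"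
    by (rule sum.reindex_bij_betw[symmetric]) (rule bij)
  also have "\<dots> = (\<Sum>q\<in>{s\<in>S. le p s}. mobius_z S le rk p q)"
    by (rule sum.cong[OF refl]) (use tr rk in \<open>auto simp: mobius_z_def\<close>)
  also have "\<dots> = (\<Sum>q\<in>S. mobius_z S le rk p q)"
    by (rule sum.mono_neutral_left) (use finS mobius_zero[OF finS poS] in \<open>auto simp: mobius_z_def\<close>)
  finally show ?thesis .
qed

lemma row_top:
  assumes fin: "finite S" and po: "po_on S le" and t: "t \<in> S" and mx: "\<forall>q\<in>S. le t q \<longrightarrow> q = t"
  shows "(\<Sum>q\<in>S. mobius_z S le rk t q) = 1"
proof -
  have "(\<Sum>q\<in>S. mobius_z S le rk t q) = mobius_z S le rk t t + (\<Sum>q\<in>S-{t}. mobius_z S le rk t q)"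
    by (rule sum.remove[OF fin t])
  also have "(\<Sum>q\<in>S-{t}. mobius_z S le rk t q) = 0"
    by (rule sum.neutral) (use mx mobius_z_zero[OF fin po] in blast)
  also have "mobius_z S le rk t t + 0 = 1" using mobius_refl[OF fin po t] by (simp add: mobius_z_def)
  finally show ?thesis .
qed

lemma mobius_poly_rows:
  assumes fin: "finite S" and po: "po_on S le"
  shows "mobius_poly S le rk = (\<Sum>p\<in>S. \<Sum>q\<in>S. mobius_z S le rk p q)"
proof -
  have "(\<Sum>p\<in>S. \<Sum>q\<in>S. mobius_z S le rk p q) = (\<Sum>(p,q)\<in>S\<times>S. mobius_z S le rk p q)"
    by (rule sum.cartesian_product)
  also have "\<dots> = mobius_poly S le rk" unfolding mobius_poly_def
    by (rule sum.mono_neutral_right) (use fin mobius_z_zero[OF fin po] in auto)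
  finally show ?thesis by simp
qed

lemma poly_1m: "[:1, -1:] = (1 - [:0, 1:] :: int poly)"
  by (simp add: one_pCons)

lemma monom_Suc_mult: "monom (c::int) (Suc n) = [:0, 1:] * monom c n"
  by (simp add: monom_Suc)

lemma po_subset: "po_on (S :: 'a set set) (\<subseteq>)"
  unfolding po_on_def by auto


section \<open>Geometry\<close>

lemma face_hull:
  fixes K :: "'a::euclidean_space set"
  assumes "polytope K" "F face_of K"
  shows "convex hull (vertex_set F) = F"
proof -
  have "convex F" using assms face_of_imp_convex by blast
  moreover have "compact F" using assms face_of_imp_compact polytope_imp_compact polytope_imp_convex by blast
  ultimately show ?thesis using Krein_Milman_Minkowski unfolding vertex_set_def by blast
qed

lemma face_rank_vs:
  fixes K :: "'a::euclidean_space set"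
  assumes "polytope K" "F face_of K"
  shows "face_rank (vertex_set F) = aff_dim F"
  using face_hull[OF assms] unfolding face_rank_def by simp

lemma fp_image: "face_poset K = vertex_set ` {F. F face_of K}"
  unfolding face_poset_def by blast

lemma fp_finite: "polytope (K::'a::euclidean_space set) \<Longrightarrow> finite (face_poset K)"
  unfolding fp_image by (rule finite_imageI) (rule finite_polytope_faces)

lemma fp_top: "polytope (K::'a::euclidean_space set) \<Longrightarrow> vertex_set K \<in> face_poset K"
proof -
  assume "polytope K"
  then have "K face_of K" by (intro face_of_refl polytope_imp_convex)
  then show ?thesis unfolding fp_image by (rule imageI[OF CollectI])
qed

lemma fp_le_top: "polytope (K::'a::euclidean_space set) \<Longrightarrow> s \<in> face_poset K \<Longrightarrow> s \<subseteq> vertex_set K"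
proof -
  assume "s \<in> face_poset K"
  then obtain F where F: "F face_of K" "s = vertex_set F" unfolding fp_image by blast
  show ?thesis
  proof
    fix x assume "x \<in> s"
    then have "x extreme_point_of F" using F unfolding vertex_set_def by simp
    then have "x extreme_point_of K" using extreme_point_of_face[OF F(1)] by simp
    then show "x \<in> vertex_set K" unfolding vertex_set_def by simp
  qed
qed

lemma fp_top_rank: "polytope (K::'a::euclidean_space set) \<Longrightarrow> face_rank (vertex_set K) = aff_dim K"
proof -
  assume K: "polytope K"
  then have "K face_of K" by (intro face_of_refl polytope_imp_convex)
  then show ?thesis by (rule face_rank_vs[OF K])
qed

lemma fp_rank_le: "polytope (K::'a::euclidean_space set) \<Longrightarrow> s \<in> face_poset K \<Longrightarrow> face_rank s \<le> aff_dim K"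
proof -
  assume K: "polytope K" and "s \<in> face_poset K"
  then obtain F where F: "F face_of K" "s = vertex_set F" unfolding fp_image by blast
  have "face_rank s = aff_dim F" using face_rank_vs[OF K F(1)] F(2) by simp
  also have "\<dots> \<le> aff_dim K" by (rule aff_dim_subset[OF face_of_imp_subset[OF F(1)]])
  finally show ?thesis .
qed

lemma fp_rank_lt: "polytope (K::'a::euclidean_space set) \<Longrightarrow> s \<in> face_poset K \<Longrightarrow> s \<noteq> vertex_set K
   \<Longrightarrow> face_rank s < aff_dim K"
proof -
  assume K: "polytope K" and "s \<in> face_poset K" and ne: "s \<noteq> vertex_set K"
  then obtain F where F: "F face_of K" "s = vertex_set F" unfolding fp_image by blast
  have "F \<noteq> K" using ne F by auto
  have "face_rank s = aff_dim F" using face_rank_vs[OF K F(1)] F(2) by simp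
  also have "\<dots> < aff_dim K" by (rule face_of_aff_dim_lt[OF polytope_imp_convex[OF K] F(1) \<open>F \<noteq> K\<close>])
  finally show ?thesis .
qed

lemma fp_facet:
  fixes K :: "'a::euclidean_space set"
  assumes K: "polytope K" and F: "FP \<in> face_poset K" and r: "face_rank FP = aff_dim K - 1"
    and s: "s \<in> face_poset K" and sub: "FP \<subseteq> s"
  shows "s = FP \<or> s = vertex_set K"
proof -
  obtain F where F: "F face_of K" "FP = vertex_set F" using F unfolding fp_image by blast
  obtain G where G: "G face_of K" "s = vertex_set G" using s unfolding fp_image by blast
  have "convex hull FP \<subseteq> convex hull s" using sub by (rule hull_mono)
  then have FG: "F \<subseteq> G" using face_hull[OF K F(1)] face_hull[OF K G(1)] F G by simp
  have FfG: "F face_of G" using face_of_subset[OF F(1) FG] face_of_imp_subset[OF G(1)] by blast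
  show ?thesis
  proof (cases "G = K")
    case True then show ?thesis using G by simp
  next
    case False
    then have "aff_dim G < aff_dim K" using face_of_aff_dim_lt[OF polytope_imp_convex[OF K] G(1)] by blast
    moreover have "aff_dim F = aff_dim K - 1" using r face_rank_vs[OF K F(1)] F by simp
    moreover have "F \<noteq> G \<Longrightarrow> aff_dim F < aff_dim G"
      using face_of_aff_dim_lt[OF face_of_imp_convex[OF G(1)] FfG] by blast
    ultimately have "F = G" by linarith
    then show ?thesis using F G by simp
  qed
qed




locale glue =
  fixes KP :: "'a::euclidean_space set" and KQ :: "'b::euclidean_space set"
    and KR :: "'c::euclidean_space set" and d :: nat
    and FP :: "'a set" and FQ :: "'b set"
    and phiP :: "'c set \<Rightarrow> 'a set" and phiQ :: "'c set \<Rightarrow> 'b set"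
  assumes KP: "polytope KP" and dP: "aff_dim KP = int d"
    and KQ: "polytope KQ" and dQ: "aff_dim KQ = int d"
    and KR: "polytope KR" and dR: "aff_dim KR = int d - 1"
    and FP: "FP \<in> face_poset KP" and rFP: "face_rank FP = int d - 1"
    and FQ: "FQ \<in> face_poset KQ" and rFQ: "face_rank FQ = int d - 1"
    and bP: "bij_betw phiP (face_poset KR) {s \<in> face_poset KP. s \<subseteq> FP}"
    and oP: "\<forall>r\<in>face_poset KR. \<forall>s\<in>face_poset KR. (phiP r \<subseteq> phiP s) = (r \<subseteq> s)"
    and rP: "\<forall>r\<in>face_poset KR. face_rank (phiP r) = face_rank r"
    and bQ: "bij_betw phiQ (face_poset KR) {s \<in> face_poset KQ. s \<subseteq> FQ}"
    and oQ: "\<forall>r\<in>face_poset KR. \<forall>s\<in>face_poset KR. (phiQ r \<subseteq> phiQ s) = (r \<subseteq> s)"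
    and rQ: "\<forall>r\<in>face_poset KR. face_rank (phiQ r) = face_rank r"
begin

abbreviation "PP \<equiv> face_poset KP"
abbreviation "QQ \<equiv> face_poset KQ"
abbreviation "RR \<equiv> face_poset KR"
abbreviation "tP \<equiv> vertex_set KP"
abbreviation "tQ \<equiv> vertex_set KQ"
abbreviation "tR \<equiv> vertex_set KR"
abbreviation "P0 \<equiv> PP - ({s\<in>PP. s \<subseteq> FP} \<union> {tP})"
abbreviation "Q0 \<equiv> QQ - ({s\<in>QQ. s \<subseteq> FQ} \<union> {tQ})"
abbreviation "R0 \<equiv> RR - {tR}"
abbreviation "GG \<equiv> gl_carrier PP QQ RR FP FQ tP tQ tR"
abbreviation "leG \<equiv> gl_le phiP phiQ"


lemma finP: "finite PP" and finQ: "finite QQ" and finR: "finite RR"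
  using fp_finite KP KQ KR by auto

lemma tops: "tP \<in> PP" "tQ \<in> QQ" "tR \<in> RR"
  "\<forall>s\<in>PP. s \<subseteq> tP" "\<forall>s\<in>QQ. s \<subseteq> tQ" "\<forall>s\<in>RR. s \<subseteq> tR"
  using fp_top fp_le_top KP KQ KR by auto

lemma rank_tops: "face_rank tP = int d" "face_rank tQ = int d" "face_rank tR = int d - 1"
  using fp_top_rank[OF KP] fp_top_rank[OF KQ] fp_top_rank[OF KR] dP dQ dR by simp_all

lemma rankR: "\<forall>s\<in>RR. face_rank s \<le> int d - 1"
proof
  fix s assume "s \<in> RR"
  then show "face_rank s \<le> int d - 1" using fp_rank_le[OF KR, of s] dR by simp
qed

lemma rankR_lt: "s \<in> RR \<Longrightarrow> s \<noteq> tR \<Longrightarrow> face_rank s < int d - 1"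
  using fp_rank_lt[OF KR, of s] dR by simp

lemma facetP: "s \<in> PP \<Longrightarrow> FP \<subseteq> s \<Longrightarrow> s = FP \<or> s = tP"
  using fp_facet[OF KP FP] rFP dP by auto
lemma facetQ: "s \<in> QQ \<Longrightarrow> FQ \<subseteq> s \<Longrightarrow> s = FQ \<or> s = tQ"
  using fp_facet[OF KQ FQ] rFQ dQ by auto

lemma FP_ne: "FP \<noteq> tP" using rFP rank_tops by auto
lemma FQ_ne: "FQ \<noteq> tQ" using rFQ rank_tops by auto

lemma phiP_facts: "phiP ` RR = {s\<in>PP. s \<subseteq> FP}" "inj_on phiP RR"
  "\<forall>r\<in>RR. phiP r \<in> PP" "\<forall>r\<in>RR. phiP r \<subseteq> FP"
  using bP by (auto simp: bij_betw_def)
lemma phiQ_facts: "phiQ ` RR = {s\<in>QQ. s \<subseteq> FQ}" "inj_on phiQ RR"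
  "\<forall>r\<in>RR. phiQ r \<in> QQ" "\<forall>r\<in>RR. phiQ r \<subseteq> FQ"
  using bQ by (auto simp: bij_betw_def)

lemma phiP_top: "phiP tR = FP"
proof -
  have "FP \<in> phiP ` RR" using phiP_facts FP by auto
  then obtain s where s: "s \<in> RR" "FP = phiP s" by auto
  have "phiP tR \<subseteq> phiP s" using phiP_facts tops s by auto
  then have "tR \<subseteq> s" using oP tops s by blast
  then have "s = tR" using tops s by auto
  then show ?thesis using s by simp
qed
lemma phiQ_top: "phiQ tR = FQ"
proof -
  have "FQ \<in> phiQ ` RR" using phiQ_facts FQ by auto
  then obtain s where s: "s \<in> RR" "FQ = phiQ s" by auto
  have "phiQ tR \<subseteq> phiQ s" using phiQ_facts tops s by auto
  then have "tR \<subseteq> s" using oQ tops s by blast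
  then have "s = tR" using tops s by auto
  then show ?thesis using s by simp
qed

lemma finG: "finite GG"
  using finP finQ finR unfolding gl_carrier_def by auto

lemma GG_cases: "x \<in> GG \<Longrightarrow> (\<exists>a\<in>P0. x = GP a) \<or> (\<exists>b\<in>Q0. x = GQ b) \<or> (\<exists>s\<in>R0. x = GR s) \<or> x = GTop"
  unfolding gl_carrier_def by auto

lemma GG_mem: "GP a \<in> GG \<longleftrightarrow> a \<in> P0" "GQ b \<in> GG \<longleftrightarrow> b \<in> Q0" "GR s \<in> GG \<longleftrightarrow> s \<in> R0" "GTop \<in> GG"
  unfolding gl_carrier_def by auto

lemma noGPGR: "a \<in> P0 \<Longrightarrow> s \<in> RR \<Longrightarrow> \<not> leG (GP a) (GR s)"
  using phiP_facts(4) by auto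
lemma noGQGR: "b \<in> Q0 \<Longrightarrow> s \<in> RR \<Longrightarrow> \<not> leG (GQ b) (GR s)"
  using phiQ_facts(4) by auto
lemma monoP: "r \<in> RR \<Longrightarrow> s \<in> RR \<Longrightarrow> r \<subseteq> s \<Longrightarrow> phiP r \<subseteq> phiP s"
  using oP by blast
lemma monoQ: "r \<in> RR \<Longrightarrow> s \<in> RR \<Longrightarrow> r \<subseteq> s \<Longrightarrow> phiQ r \<subseteq> phiQ s"
  using oQ by blast

lemma phiP_subF: "s \<in> RR \<Longrightarrow> phiP s \<subseteq> FP" using phiP_facts(4) by blast
lemma phiQ_subF: "s \<in> RR \<Longrightarrow> phiQ s \<subseteq> FQ" using phiQ_facts(4) by blast

lemma oP': "s \<in> RR \<Longrightarrow> t \<in> RR \<Longrightarrow> (phiP s \<subseteq> phiP t) = (s \<subseteq> t)" using oP by blast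
lemma oQ': "s \<in> RR \<Longrightarrow> t \<in> RR \<Longrightarrow> (phiQ s \<subseteq> phiQ t) = (s \<subseteq> t)" using oQ by blast

lemma poG: "po_on GG leG"
  unfolding po_on_def
proof (intro conjI ballI impI)
  fix x assume "x \<in> GG" then show "leG x x" by (cases x) auto
next
  fix x y assume xy: "x \<in> GG" "y \<in> GG" "leG x y" "leG y x"
  show "x = y"
    using xy noGPGR noGQGR
    by (cases x; cases y) (simp_all add: GG_mem, (metis phiP_subF phiQ_subF)+)
next
  fix x y z assume xyz: "x \<in> GG" "y \<in> GG" "z \<in> GG" "leG x y" "leG y z"
  show "leG x z"
    using xyz noGPGR noGQGR monoP monoQ
    by (cases x; cases y; cases z) (simp_all add: GG_mem, (meson monoP monoQ subset_trans)+)
qed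

lemma sumP: "(\<Sum>b\<in>PP. F b) = (\<Sum>a\<in>P0. F a) + (\<Sum>s\<in>RR. F (phiP s)) + F tP"
proof -
  have tPn: "tP \<notin> phiP ` RR"
  proof
    assume "tP \<in> phiP ` RR"
    then have "tP \<subseteq> FP" using phiP_facts(1) by blast
    then have "FP = tP" using tops FP by blast
    then show False using FP_ne by simp
  qed
  have PPeq: "PP = (P0 \<union> phiP ` RR) \<union> {tP}" using phiP_facts(1) tops by blast
  have d1: "P0 \<inter> phiP ` RR = {}" using phiP_facts(1) by blast
  have "(\<Sum>b\<in>PP. F b) = (\<Sum>b\<in>(P0 \<union> phiP ` RR) \<union> {tP}. F b)"
    by (rule arg_cong[OF PPeq])
  also have "\<dots> = (\<Sum>b\<in>P0 \<union> phiP ` RR. F b) + (\<Sum>b\<in>{tP}. F b)"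
    by (rule sum.union_disjoint) (use finP finR tPn in auto)
  also have "(\<Sum>b\<in>P0 \<union> phiP ` RR. F b) = (\<Sum>b\<in>P0. F b) + (\<Sum>b\<in>phiP ` RR. F b)"
    by (rule sum.union_disjoint) (use finP finR d1 in auto)
  also have "(\<Sum>b\<in>phiP ` RR. F b) = (\<Sum>s\<in>RR. F (phiP s))"
    by (rule sum.reindex[OF phiP_facts(2), unfolded comp_def])
  finally show ?thesis by simp
qed

lemma transRP:
  assumes r: "r \<in> RR" and s: "s \<in> RR"
  shows "mobius PP (\<subseteq>) (phiP r) (phiP s) = mobius RR (\<subseteq>) r s"
proof (cases "r \<subseteq> s")
  case False
  then have "\<not> phiP r \<subseteq> phiP s" using oP r s by blast
  then show ?thesis using False mobius_zero[OF finP po_subset, of "phiP r" "phiP s"] mobius_zero[OF finR po_subset, of r s] by simp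
next
  case True
  let ?D = "{s\<in>RR. r \<subseteq> s}" and ?D' = "{b\<in>PP. phiP r \<subseteq> b \<and> b \<subseteq> FP}"
  have bij: "bij_betw phiP ?D ?D'"
    unfolding bij_betw_def
  proof
    show "inj_on phiP ?D" using phiP_facts(2) by (rule inj_on_subset) blast
    show "phiP ` ?D = ?D'"
    proof
      show "phiP ` ?D \<subseteq> ?D'" using phiP_facts(3,4) monoP r by blast
      show "?D' \<subseteq> phiP ` ?D"
      proof
        fix b assume b: "b \<in> ?D'"
        then have "b \<in> phiP ` RR" using phiP_facts(1) by blast
        then obtain t where t: "t \<in> RR" "b = phiP t" by blast
        then have "r \<subseteq> t" using oP r b by blast
        then show "b \<in> phiP ` ?D" using t by blast
      qed
    qed
  qed
  show ?thesis
    by (rule mobius_transfer[OF finR po_subset finP po_subset, of r ?D ?D' phiP s])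
       (use r s True bij oP in auto)
qed

definition toP :: "('a set, 'b set, 'c set) glel \<Rightarrow> 'a set" where
  "toP x = (case x of GR s \<Rightarrow> phiP s | GP a \<Rightarrow> a | _ \<Rightarrow> {})"

lemma toP_simps [simp]: "toP (GR s) = phiP s" "toP (GP a) = a"
  unfolding toP_def by simp_all

lemma phiP_ne_top: "s \<in> RR \<Longrightarrow> phiP s \<noteq> tP"
proof
  assume "s \<in> RR" "phiP s = tP"
  then have "tP \<subseteq> FP" using phiP_facts(4) by metis
  then have "FP = tP" using tops FP by blast
  then show False using FP_ne by simp
qed

lemma transGP:
  assumes r: "r \<in> R0" and x: "x \<in> GG" and xn: "\<forall>b. x \<noteq> GQ b" "x \<noteq> GTop"
  shows "mobius PP (\<subseteq>) (phiP r) (toP x) = mobius GG leG (GR r) x"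
proof -
  have rR: "r \<in> RR" using r by blast
  let ?D = "{x\<in>GG. leG (GR r) x \<and> (\<forall>b. x \<noteq> GQ b) \<and> x \<noteq> GTop}"
  let ?D' = "{b\<in>PP. phiP r \<subseteq> b \<and> b \<noteq> tP \<and> b \<noteq> FP}"
  have xform: "(\<exists>a\<in>P0. y = GP a) \<or> (\<exists>s\<in>R0. y = GR s)" if "y \<in> GG" "\<forall>b. y \<noteq> GQ b" "y \<noteq> GTop" for y
    using GG_cases[OF that(1)] that(2,3) by blast
  have ord: "\<forall>x\<in>?D. \<forall>y\<in>?D. toP x \<subseteq> toP y = leG x y"
  proof (intro ballI)
    fix x y assume x: "x \<in> ?D" and y: "y \<in> ?D"
    from xform[of x] x have xf: "(\<exists>a\<in>P0. x = GP a) \<or> (\<exists>s\<in>R0. x = GR s)" by blast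
    from xform[of y] y have yf: "(\<exists>a\<in>P0. y = GP a) \<or> (\<exists>s\<in>R0. y = GR s)" by blast
    from xf yf show "toP x \<subseteq> toP y = leG x y"
      by (elim disjE bexE) (simp_all add: oP')
  qed
  have bij: "bij_betw toP ?D ?D'"
    unfolding bij_betw_def
  proof
    show "inj_on toP ?D"
    proof (rule inj_onI)
      fix x y assume x: "x \<in> ?D" and y: "y \<in> ?D" and e: "toP x = toP y"
      from xform[of x] x have xf: "(\<exists>a\<in>P0. x = GP a) \<or> (\<exists>s\<in>R0. x = GR s)" by blast
      from xform[of y] y have yf: "(\<exists>a\<in>P0. y = GP a) \<or> (\<exists>s\<in>R0. y = GR s)" by blast
      from xf yf show "x = y"
      proof (elim disjE bexE)
        fix a a' assume "a \<in> P0" "x = GP a" "a' \<in> P0" "y = GP a'"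
        then show ?thesis using e by simp
      next
        fix a s assume "a \<in> P0" "x = GP a" "s \<in> R0" "y = GR s"
        then show ?thesis using e phiP_subF[of s] by auto
      next
        fix a s assume "s \<in> R0" "x = GR s" "a \<in> P0" "y = GP a"
        then show ?thesis using e phiP_subF[of s] by auto
      next
        fix s s' assume "s \<in> R0" "x = GR s" "s' \<in> R0" "y = GR s'"
        then show ?thesis using e phiP_facts(2) unfolding inj_on_def by simp
      qed
    qed
    show "toP ` ?D = ?D'"
    proof
      show "toP ` ?D \<subseteq> ?D'"
      proof
        fix b assume "b \<in> toP ` ?D"
        then obtain y where y: "y \<in> ?D" "b = toP y" by blast
        have yf: "(\<exists>a\<in>P0. y = GP a) \<or> (\<exists>s\<in>R0. y = GR s)" using xform[of y] y by blast
        from yf show "b \<in> ?D'"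
        proof (elim disjE bexE)
          fix a assume a: "a \<in> P0" "y = GP a"
          then show "b \<in> ?D'" using y by auto
        next
          fix s assume s: "s \<in> R0" "y = GR s"
          then have sR: "s \<in> RR" "s \<noteq> tR" by auto
          have "phiP s \<noteq> FP"
          proof
            assume "phiP s = FP"
            then have "phiP s = phiP tR" using phiP_top by simp
            then show False using sR tops phiP_facts(2) unfolding inj_on_def by blast
          qed
          then show "b \<in> ?D'" using y s sR phiP_facts(3) phiP_ne_top[OF sR(1)] monoP[OF rR sR(1)] by auto
        qed
      qed
      show "?D' \<subseteq> toP ` ?D"
      proof
        fix b assume b: "b \<in> ?D'"
        show "b \<in> toP ` ?D"
        proof (cases "b \<subseteq> FP")
          case True
          then have "b \<in> phiP ` RR" using phiP_facts(1) b by blast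
          then obtain t where t: "t \<in> RR" "b = phiP t" by blast
          have "t \<noteq> tR" using t b phiP_top by blast
          moreover have "r \<subseteq> t" using oP rR t b by blast
          ultimately have "GR t \<in> ?D" using t by (simp add: GG_mem)
          then show ?thesis using t by force
        next
          case False
          then have "GP b \<in> ?D" using b by (simp add: GG_mem)
          then show ?thesis by force
        qed
      qed
    qed
  qed
  have D'down: "\<forall>s\<in>?D'. \<forall>t\<in>PP. phiP r \<subseteq> t \<longrightarrow> t \<subseteq> s \<longrightarrow> t \<in> ?D'"
  proof (intro ballI impI)
    fix s t assume s: "s \<in> ?D'" and t: "t \<in> PP" "phiP r \<subseteq> t" "t \<subseteq> s"
    have "t \<noteq> tP" using s t tops by blast
    moreover have "t \<noteq> FP" using s t facetP by blast
    ultimately show "t \<in> ?D'" using t by blast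
  qed
  have Ddown: "\<forall>s\<in>?D. \<forall>t\<in>GG. leG (GR r) t \<longrightarrow> leG t s \<longrightarrow> t \<in> ?D"
  proof (intro ballI impI)
    fix s t assume s: "s \<in> ?D" and t: "t \<in> GG" "leG (GR r) t" "leG t s"
    have "t \<noteq> GTop" using s t(3) by (cases s) auto
    moreover have "\<forall>b. t \<noteq> GQ b"
    proof
      fix b show "t \<noteq> GQ b"
      proof
        assume tb: "t = GQ b"
        then have "b \<in> Q0" using t GG_mem by blast
        have sf: "(\<exists>a\<in>P0. s = GP a) \<or> (\<exists>u\<in>R0. s = GR u)" using xform[of s] s by blast
        from sf show False
        proof (elim disjE bexE)
          fix a assume "a \<in> P0" "s = GP a" then show False using t(3) tb by simp
        next
          fix u assume "u \<in> R0" "s = GR u" then show False using t(3) tb noGQGR[OF \<open>b \<in> Q0\<close>] by blast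
        qed
      qed
    qed
    ultimately show "t \<in> ?D" using t by blast
  qed
  have pD: "GR r \<in> ?D" using r by (simp add: GG_mem)
  have DS: "?D \<subseteq> {s\<in>GG. leG (GR r) s}" by blast
  have DT: "?D' \<subseteq> {s\<in>PP. toP (GR r) \<subseteq> s}" unfolding toP_simps by blast
  have D'down2: "\<forall>s\<in>?D'. \<forall>t\<in>PP. toP (GR r) \<subseteq> t \<longrightarrow> t \<subseteq> s \<longrightarrow> t \<in> ?D'"
    using D'down unfolding toP_simps .
  show ?thesis
  proof (cases "leG (GR r) x")
    case True
    then have xD: "x \<in> ?D" using x xn by blast
    have tr: "toP (GR r) = phiP r" by (rule toP_simps(1))
    show ?thesis
      using mobius_transfer[OF finG poG finP po_subset pD DS Ddown DT D'down2 bij ord xD] unfolding tr .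
  next
    case False
    have "\<not> phiP r \<subseteq> toP x"
    proof
      assume h: "phiP r \<subseteq> toP x"
      from xform[OF x xn] show False
      proof (elim disjE bexE)
        fix a assume "a \<in> P0" "x = GP a" then show False using h False by simp
      next
        fix s assume "s \<in> R0" "x = GR s" then show False using h False oP' r by simp
      qed
    qed
    then show ?thesis
      using False mobius_zero[OF finP po_subset, of "phiP r" "toP x"] mobius_zero[OF finG poG, of "GR r" x] by simp
  qed
qed

definition toGP :: "'a set \<Rightarrow> ('a set, 'b set, 'c set) glel" where
  "toGP b = (if b = tP then GTop else GP b)"

lemma rowGP:
  assumes a: "a \<in> P0"
  shows "(\<Sum>x\<in>GG. mobius_z GG leG (gl_rank d) (GP a) x) = (\<Sum>q\<in>PP. mobius_z PP (\<subseteq>) face_rank a q)"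
proof -
  have fa: "toGP a = GP a" using a unfolding toGP_def by auto
  have aP: "a \<in> PP" "\<not> a \<subseteq> FP" "a \<noteq> tP" using a by auto
  let ?D = "{s\<in>PP. a \<subseteq> s}" and ?D' = "{t\<in>GG. leG (toGP a) t}"
  have bij: "bij_betw toGP ?D ?D'"
    unfolding bij_betw_def
  proof
    show "inj_on toGP ?D" by (rule inj_onI) (auto simp: toGP_def split: if_splits)
    show "toGP ` ?D = ?D'"
    proof
      show "toGP ` ?D \<subseteq> ?D'"
      proof
        fix y assume "y \<in> toGP ` ?D"
        then obtain b where b: "b \<in> PP" "a \<subseteq> b" "y = toGP b" by blast
        show "y \<in> ?D'"
        proof (cases "b = tP")
          case True then show ?thesis using b fa by (simp add: toGP_def GG_mem)
        next
          case False
          have "\<not> b \<subseteq> FP" using aP b by blast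
          then show ?thesis using b fa False by (simp add: toGP_def GG_mem)
        qed
      qed
      show "?D' \<subseteq> toGP ` ?D"
      proof
        fix y assume y: "y \<in> ?D'"
        then have yG: "y \<in> GG" and le: "leG (GP a) y" using fa by auto
        from GG_cases[OF yG] show "y \<in> toGP ` ?D"
        proof (elim disjE bexE)
          fix b assume b: "b \<in> P0" "y = GP b"
          then have "toGP b = y" unfolding toGP_def by auto
          moreover have "b \<in> ?D" using b le by auto
          ultimately show ?thesis by force
        next
          fix b assume "b \<in> Q0" "y = GQ b" then show ?thesis using le by simp
        next
          fix s assume "s \<in> R0" "y = GR s" then show ?thesis using le noGPGR[OF a] by blast
        next
          assume "y = GTop"
          then have "toGP tP = y" unfolding toGP_def by simp
          moreover have "tP \<in> ?D" using tops aP by blast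
          ultimately show ?thesis by force
        qed
      qed
    qed
  qed
  have ord: "\<forall>x\<in>?D. \<forall>y\<in>?D. leG (toGP x) (toGP y) = (x \<subseteq> y)"
  proof (intro ballI)
    fix x y assume x: "x \<in> ?D" and y: "y \<in> ?D"
    show "leG (toGP x) (toGP y) = (x \<subseteq> y)"
    proof (cases "y = tP")
      case True then show ?thesis using x tops by (simp add: toGP_def)
    next
      case False
      have "x = tP \<Longrightarrow> \<not> x \<subseteq> y" using False y tops by blast
      then show ?thesis using False by (cases "x = tP") (simp_all add: toGP_def)
    qed
  qed
  have rk: "\<forall>q\<in>?D. gl_rank d (toGP q) - gl_rank d (toGP a) = face_rank q - face_rank a"
    using rank_tops fa by (auto simp: toGP_def)
  show ?thesis
    using row_transfer[OF finP po_subset finG poG aP(1) bij ord rk] fa by simp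
qed

lemma rowFP: "(\<Sum>q\<in>PP. mobius_z PP (\<subseteq>) face_rank FP q) = [:1, -1:]"
proof -
  have "(\<Sum>q\<in>PP. mobius_z PP (\<subseteq>) face_rank FP q) = (\<Sum>q\<in>{FP, tP}. mobius_z PP (\<subseteq>) face_rank FP q)"
  proof (rule sum.mono_neutral_right)
    show "finite PP" by (rule finP)
    show "{FP, tP} \<subseteq> PP" using FP tops by blast
    show "\<forall>i\<in>PP - {FP, tP}. mobius_z PP (\<subseteq>) face_rank FP i = 0"
      using facetP mobius_z_zero[OF finP po_subset] by blast
  qed
  also have "\<dots> = mobius_z PP (\<subseteq>) face_rank FP FP + mobius_z PP (\<subseteq>) face_rank FP tP"
    using FP_ne by simp
  also have "mobius PP (\<subseteq>) FP tP = -1"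
  proof -
    have S: "{s\<in>PP. FP \<subseteq> s \<and> s \<subseteq> tP \<and> s \<noteq> tP} = {FP}" using facetP FP FP_ne tops by blast
    have c: "(FP \<in> PP \<and> tP \<in> PP \<and> FP \<subseteq> tP) = True" using FP tops by blast
    show ?thesis using mobius_rec[OF finP po_subset, of FP tP] FP_ne
      unfolding c S if_True by (simp add: mobius_refl[OF finP po_subset FP])
  qed
  then have "mobius_z PP (\<subseteq>) face_rank FP tP = monom (-1) 1"
    unfolding mobius_z_def using rank_tops rFP by simp
  also have "mobius_z PP (\<subseteq>) face_rank FP FP = 1"
    unfolding mobius_z_def using mobius_refl[OF finP po_subset FP] by simp
  finally show ?thesis by (simp add: monom_altdef one_pCons)
qed

lemma rowtP: "(\<Sum>q\<in>PP. mobius_z PP (\<subseteq>) face_rank tP q) = 1"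
  by (rule row_top[OF finP po_subset]) (use tops in blast)+

lemma sumQ: "(\<Sum>b\<in>QQ. F b) = (\<Sum>a\<in>Q0. F a) + (\<Sum>s\<in>RR. F (phiQ s)) + F tQ"
proof -
  have tPn: "tQ \<notin> phiQ ` RR"
  proof
    assume "tQ \<in> phiQ ` RR"
    then have "tQ \<subseteq> FQ" using phiQ_facts(1) by blast
    then have "FQ = tQ" using tops FQ by blast
    then show False using FQ_ne by simp
  qed
  have PPeq: "QQ = (Q0 \<union> phiQ ` RR) \<union> {tQ}" using phiQ_facts(1) tops by blast
  have d1: "Q0 \<inter> phiQ ` RR = {}" using phiQ_facts(1) by blast
  have "(\<Sum>b\<in>QQ. F b) = (\<Sum>b\<in>(Q0 \<union> phiQ ` RR) \<union> {tQ}. F b)"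
    by (rule arg_cong[OF PPeq])
  also have "\<dots> = (\<Sum>b\<in>Q0 \<union> phiQ ` RR. F b) + (\<Sum>b\<in>{tQ}. F b)"
    by (rule sum.union_disjoint) (use finQ finR tPn in auto)
  also have "(\<Sum>b\<in>Q0 \<union> phiQ ` RR. F b) = (\<Sum>b\<in>Q0. F b) + (\<Sum>b\<in>phiQ ` RR. F b)"
    by (rule sum.union_disjoint) (use finQ finR d1 in auto)
  also have "(\<Sum>b\<in>phiQ ` RR. F b) = (\<Sum>s\<in>RR. F (phiQ s))"
    by (rule sum.reindex[OF phiQ_facts(2), unfolded comp_def])
  finally show ?thesis by simp
qed

lemma transRQ:
  assumes r: "r \<in> RR" and s: "s \<in> RR"
  shows "mobius QQ (\<subseteq>) (phiQ r) (phiQ s) = mobius RR (\<subseteq>) r s"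
proof (cases "r \<subseteq> s")
  case False
  then have "\<not> phiQ r \<subseteq> phiQ s" using oQ r s by blast
  then show ?thesis using False mobius_zero[OF finQ po_subset, of "phiQ r" "phiQ s"] mobius_zero[OF finR po_subset, of r s] by simp
next
  case True
  let ?D = "{s\<in>RR. r \<subseteq> s}" and ?D' = "{b\<in>QQ. phiQ r \<subseteq> b \<and> b \<subseteq> FQ}"
  have bij: "bij_betw phiQ ?D ?D'"
    unfolding bij_betw_def
  proof
    show "inj_on phiQ ?D" using phiQ_facts(2) by (rule inj_on_subset) blast
    show "phiQ ` ?D = ?D'"
    proof
      show "phiQ ` ?D \<subseteq> ?D'" using phiQ_facts(3,4) monoQ r by blast
      show "?D' \<subseteq> phiQ ` ?D"
      proof
        fix b assume b: "b \<in> ?D'"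
        then have "b \<in> phiQ ` RR" using phiQ_facts(1) by blast
        then obtain t where t: "t \<in> RR" "b = phiQ t" by blast
        then have "r \<subseteq> t" using oQ r b by blast
        then show "b \<in> phiQ ` ?D" using t by blast
      qed
    qed
  qed
  show ?thesis
    by (rule mobius_transfer[OF finR po_subset finQ po_subset, of r ?D ?D' phiQ s])
       (use r s True bij oQ in auto)
qed

definition toQ :: "('a set, 'b set, 'c set) glel \<Rightarrow> 'b set" where
  "toQ x = (case x of GR s \<Rightarrow> phiQ s | GQ a \<Rightarrow> a | _ \<Rightarrow> {})"

lemma toQ_simps [simp]: "toQ (GR s) = phiQ s" "toQ (GQ a) = a"
  unfolding toQ_def by simp_all

lemma phiQ_ne_top: "s \<in> RR \<Longrightarrow> phiQ s \<noteq> tQ"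
proof
  assume "s \<in> RR" "phiQ s = tQ"
  then have "tQ \<subseteq> FQ" using phiQ_facts(4) by metis
  then have "FQ = tQ" using tops FQ by blast
  then show False using FQ_ne by simp
qed

lemma transGQ:
  assumes r: "r \<in> R0" and x: "x \<in> GG" and xn: "\<forall>b. x \<noteq> GP b" "x \<noteq> GTop"
  shows "mobius QQ (\<subseteq>) (phiQ r) (toQ x) = mobius GG leG (GR r) x"
proof -
  have rR: "r \<in> RR" using r by blast
  let ?D = "{x\<in>GG. leG (GR r) x \<and> (\<forall>b. x \<noteq> GP b) \<and> x \<noteq> GTop}"
  let ?D' = "{b\<in>QQ. phiQ r \<subseteq> b \<and> b \<noteq> tQ \<and> b \<noteq> FQ}"
  have xform: "(\<exists>a\<in>Q0. y = GQ a) \<or> (\<exists>s\<in>R0. y = GR s)" if "y \<in> GG" "\<forall>b. y \<noteq> GP b" "y \<noteq> GTop" for y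
    using GG_cases[OF that(1)] that(2,3) by blast
  have ord: "\<forall>x\<in>?D. \<forall>y\<in>?D. toQ x \<subseteq> toQ y = leG x y"
  proof (intro ballI)
    fix x y assume x: "x \<in> ?D" and y: "y \<in> ?D"
    from xform[of x] x have xf: "(\<exists>a\<in>Q0. x = GQ a) \<or> (\<exists>s\<in>R0. x = GR s)" by blast
    from xform[of y] y have yf: "(\<exists>a\<in>Q0. y = GQ a) \<or> (\<exists>s\<in>R0. y = GR s)" by blast
    from xf yf show "toQ x \<subseteq> toQ y = leG x y"
      by (elim disjE bexE) (simp_all add: oQ')
  qed
  have bij: "bij_betw toQ ?D ?D'"
    unfolding bij_betw_def
  proof
    show "inj_on toQ ?D"
    proof (rule inj_onI)
      fix x y assume x: "x \<in> ?D" and y: "y \<in> ?D" and e: "toQ x = toQ y"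
      from xform[of x] x have xf: "(\<exists>a\<in>Q0. x = GQ a) \<or> (\<exists>s\<in>R0. x = GR s)" by blast
      from xform[of y] y have yf: "(\<exists>a\<in>Q0. y = GQ a) \<or> (\<exists>s\<in>R0. y = GR s)" by blast
      from xf yf show "x = y"
      proof (elim disjE bexE)
        fix a a' assume "a \<in> Q0" "x = GQ a" "a' \<in> Q0" "y = GQ a'"
        then show ?thesis using e by simp
      next
        fix a s assume "a \<in> Q0" "x = GQ a" "s \<in> R0" "y = GR s"
        then show ?thesis using e phiQ_subF[of s] by auto
      next
        fix a s assume "s \<in> R0" "x = GR s" "a \<in> Q0" "y = GQ a"
        then show ?thesis using e phiQ_subF[of s] by auto
      next
        fix s s' assume "s \<in> R0" "x = GR s" "s' \<in> R0" "y = GR s'"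
        then show ?thesis using e phiQ_facts(2) unfolding inj_on_def by simp
      qed
    qed
    show "toQ ` ?D = ?D'"
    proof
      show "toQ ` ?D \<subseteq> ?D'"
      proof
        fix b assume "b \<in> toQ ` ?D"
        then obtain y where y: "y \<in> ?D" "b = toQ y" by blast
        have yf: "(\<exists>a\<in>Q0. y = GQ a) \<or> (\<exists>s\<in>R0. y = GR s)" using xform[of y] y by blast
        from yf show "b \<in> ?D'"
        proof (elim disjE bexE)
          fix a assume a: "a \<in> Q0" "y = GQ a"
          then show "b \<in> ?D'" using y by auto
        next
          fix s assume s: "s \<in> R0" "y = GR s"
          then have sR: "s \<in> RR" "s \<noteq> tR" by auto
          have "phiQ s \<noteq> FQ"
          proof
            assume "phiQ s = FQ"
            then have "phiQ s = phiQ tR" using phiQ_top by simp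
            then show False using sR tops phiQ_facts(2) unfolding inj_on_def by blast
          qed
          then show "b \<in> ?D'" using y s sR phiQ_facts(3) phiQ_ne_top[OF sR(1)] monoQ[OF rR sR(1)] by auto
        qed
      qed
      show "?D' \<subseteq> toQ ` ?D"
      proof
        fix b assume b: "b \<in> ?D'"
        show "b \<in> toQ ` ?D"
        proof (cases "b \<subseteq> FQ")
          case True
          then have "b \<in> phiQ ` RR" using phiQ_facts(1) b by blast
          then obtain t where t: "t \<in> RR" "b = phiQ t" by blast
          have "t \<noteq> tR" using t b phiQ_top by blast
          moreover have "r \<subseteq> t" using oQ rR t b by blast
          ultimately have "GR t \<in> ?D" using t by (simp add: GG_mem)
          then show ?thesis using t by force
        next
          case False
          then have "GQ b \<in> ?D" using b by (simp add: GG_mem)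
          then show ?thesis by force
        qed
      qed
    qed
  qed
  have D'down: "\<forall>s\<in>?D'. \<forall>t\<in>QQ. phiQ r \<subseteq> t \<longrightarrow> t \<subseteq> s \<longrightarrow> t \<in> ?D'"
  proof (intro ballI impI)
    fix s t assume s: "s \<in> ?D'" and t: "t \<in> QQ" "phiQ r \<subseteq> t" "t \<subseteq> s"
    have "t \<noteq> tQ" using s t tops by blast
    moreover have "t \<noteq> FQ" using s t facetQ by blast
    ultimately show "t \<in> ?D'" using t by blast
  qed
  have Ddown: "\<forall>s\<in>?D. \<forall>t\<in>GG. leG (GR r) t \<longrightarrow> leG t s \<longrightarrow> t \<in> ?D"
  proof (intro ballI impI)
    fix s t assume s: "s \<in> ?D" and t: "t \<in> GG" "leG (GR r) t" "leG t s"
    have "t \<noteq> GTop" using s t(3) by (cases s) auto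
    moreover have "\<forall>b. t \<noteq> GP b"
    proof
      fix b show "t \<noteq> GP b"
      proof
        assume tb: "t = GP b"
        then have "b \<in> P0" using t GG_mem by blast
        have sf: "(\<exists>a\<in>Q0. s = GQ a) \<or> (\<exists>u\<in>R0. s = GR u)" using xform[of s] s by blast
        from sf show False
        proof (elim disjE bexE)
          fix a assume "a \<in> Q0" "s = GQ a" then show False using t(3) tb by simp
        next
          fix u assume "u \<in> R0" "s = GR u" then show False using t(3) tb noGPGR[OF \<open>b \<in> P0\<close>] by blast
        qed
      qed
    qed
    ultimately show "t \<in> ?D" using t by blast
  qed
  have pD: "GR r \<in> ?D" using r by (simp add: GG_mem)
  have DS: "?D \<subseteq> {s\<in>GG. leG (GR r) s}" by blast
  have DT: "?D' \<subseteq> {s\<in>QQ. toQ (GR r) \<subseteq> s}" unfolding toQ_simps by blast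
  have D'down2: "\<forall>s\<in>?D'. \<forall>t\<in>QQ. toQ (GR r) \<subseteq> t \<longrightarrow> t \<subseteq> s \<longrightarrow> t \<in> ?D'"
    using D'down unfolding toQ_simps .
  show ?thesis
  proof (cases "leG (GR r) x")
    case True
    then have xD: "x \<in> ?D" using x xn by blast
    have tr: "toQ (GR r) = phiQ r" by (rule toQ_simps(1))
    show ?thesis
      using mobius_transfer[OF finG poG finQ po_subset pD DS Ddown DT D'down2 bij ord xD] unfolding tr .
  next
    case False
    have "\<not> phiQ r \<subseteq> toQ x"
    proof
      assume h: "phiQ r \<subseteq> toQ x"
      from xform[OF x xn] show False
      proof (elim disjE bexE)
        fix a assume "a \<in> Q0" "x = GQ a" then show False using h False by simp
      next
        fix s assume "s \<in> R0" "x = GR s" then show False using h False oQ' r by simp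
      qed
    qed
    then show ?thesis
      using False mobius_zero[OF finQ po_subset, of "phiQ r" "toQ x"] mobius_zero[OF finG poG, of "GR r" x] by simp
  qed
qed

definition toGQ :: "'b set \<Rightarrow> ('a set, 'b set, 'c set) glel" where
  "toGQ b = (if b = tQ then GTop else GQ b)"

lemma rowGQ:
  assumes a: "a \<in> Q0"
  shows "(\<Sum>x\<in>GG. mobius_z GG leG (gl_rank d) (GQ a) x) = (\<Sum>q\<in>QQ. mobius_z QQ (\<subseteq>) face_rank a q)"
proof -
  have fa: "toGQ a = GQ a" using a unfolding toGQ_def by auto
  have aP: "a \<in> QQ" "\<not> a \<subseteq> FQ" "a \<noteq> tQ" using a by auto
  let ?D = "{s\<in>QQ. a \<subseteq> s}" and ?D' = "{t\<in>GG. leG (toGQ a) t}"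
  have bij: "bij_betw toGQ ?D ?D'"
    unfolding bij_betw_def
  proof
    show "inj_on toGQ ?D" by (rule inj_onI) (auto simp: toGQ_def split: if_splits)
    show "toGQ ` ?D = ?D'"
    proof
      show "toGQ ` ?D \<subseteq> ?D'"
      proof
        fix y assume "y \<in> toGQ ` ?D"
        then obtain b where b: "b \<in> QQ" "a \<subseteq> b" "y = toGQ b" by blast
        show "y \<in> ?D'"
        proof (cases "b = tQ")
          case True then show ?thesis using b fa by (simp add: toGQ_def GG_mem)
        next
          case False
          have "\<not> b \<subseteq> FQ" using aP b by blast
          then show ?thesis using b fa False by (simp add: toGQ_def GG_mem)
        qed
      qed
      show "?D' \<subseteq> toGQ ` ?D"
      proof
        fix y assume y: "y \<in> ?D'"
        then have yG: "y \<in> GG" and le: "leG (GQ a) y" using fa by auto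
        from GG_cases[OF yG] show "y \<in> toGQ ` ?D"
        proof (elim disjE bexE)
          fix b assume "b \<in> P0" "y = GP b" then show ?thesis using le by simp
        next
          fix b assume b: "b \<in> Q0" "y = GQ b"
          then have "toGQ b = y" unfolding toGQ_def by auto
          moreover have "b \<in> ?D" using b le by auto
          ultimately show ?thesis by force
        next
          fix s assume "s \<in> R0" "y = GR s" then show ?thesis using le noGQGR[OF a] by blast
        next
          assume "y = GTop"
          then have "toGQ tQ = y" unfolding toGQ_def by simp
          moreover have "tQ \<in> ?D" using tops aP by blast
          ultimately show ?thesis by force
        qed
      qed
    qed
  qed
  have ord: "\<forall>x\<in>?D. \<forall>y\<in>?D. leG (toGQ x) (toGQ y) = (x \<subseteq> y)"
  proof (intro ballI)
    fix x y assume x: "x \<in> ?D" and y: "y \<in> ?D"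
    show "leG (toGQ x) (toGQ y) = (x \<subseteq> y)"
    proof (cases "y = tQ")
      case True then show ?thesis using x tops by (simp add: toGQ_def)
    next
      case False
      have "x = tQ \<Longrightarrow> \<not> x \<subseteq> y" using False y tops by blast
      then show ?thesis using False by (cases "x = tQ") (simp_all add: toGQ_def)
    qed
  qed
  have rk: "\<forall>q\<in>?D. gl_rank d (toGQ q) - gl_rank d (toGQ a) = face_rank q - face_rank a"
    using rank_tops fa by (auto simp: toGQ_def)
  show ?thesis
    using row_transfer[OF finQ po_subset finG poG aP(1) bij ord rk] fa by simp
qed

lemma rowFQ: "(\<Sum>q\<in>QQ. mobius_z QQ (\<subseteq>) face_rank FQ q) = [:1, -1:]"
proof -
  have "(\<Sum>q\<in>QQ. mobius_z QQ (\<subseteq>) face_rank FQ q) = (\<Sum>q\<in>{FQ, tQ}. mobius_z QQ (\<subseteq>) face_rank FQ q)"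
  proof (rule sum.mono_neutral_right)
    show "finite QQ" by (rule finQ)
    show "{FQ, tQ} \<subseteq> QQ" using FQ tops by blast
    show "\<forall>i\<in>QQ - {FQ, tQ}. mobius_z QQ (\<subseteq>) face_rank FQ i = 0"
      using facetQ mobius_z_zero[OF finQ po_subset] by blast
  qed
  also have "\<dots> = mobius_z QQ (\<subseteq>) face_rank FQ FQ + mobius_z QQ (\<subseteq>) face_rank FQ tQ"
    using FQ_ne by simp
  also have "mobius QQ (\<subseteq>) FQ tQ = -1"
  proof -
    have S: "{s\<in>QQ. FQ \<subseteq> s \<and> s \<subseteq> tQ \<and> s \<noteq> tQ} = {FQ}" using facetQ FQ FQ_ne tops by blast
    have c: "(FQ \<in> QQ \<and> tQ \<in> QQ \<and> FQ \<subseteq> tQ) = True" using FQ tops by blast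
    show ?thesis using mobius_rec[OF finQ po_subset, of FQ tQ] FQ_ne
      unfolding c S if_True by (simp add: mobius_refl[OF finQ po_subset FQ])
  qed
  then have "mobius_z QQ (\<subseteq>) face_rank FQ tQ = monom (-1) 1"
    unfolding mobius_z_def using rank_tops rFQ by simp
  also have "mobius_z QQ (\<subseteq>) face_rank FQ FQ = 1"
    unfolding mobius_z_def using mobius_refl[OF finQ po_subset FQ] by simp
  finally show ?thesis by (simp add: monom_altdef one_pCons)
qed

lemma rowtQ: "(\<Sum>q\<in>QQ. mobius_z QQ (\<subseteq>) face_rank tQ q) = 1"
  by (rule row_top[OF finQ po_subset]) (use tops in blast)+

lemma sumG: "(\<Sum>x\<in>GG. F x) = (\<Sum>a\<in>P0. F (GP a)) + (\<Sum>b\<in>Q0. F (GQ b)) + (\<Sum>s\<in>R0. F (GR s)) + F GTop"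
proof -
  have fA: "finite (GP ` P0)" "finite (GQ ` Q0)" "finite (GR ` R0)" using finP finQ finR by auto
  have "(\<Sum>x\<in>GG. F x) = (\<Sum>x\<in>GP ` P0 \<union> GQ ` Q0 \<union> GR ` R0. F x) + (\<Sum>x\<in>{GTop}. F x)"
    unfolding gl_carrier_def by (rule sum.union_disjoint) (use fA in auto)
  also have "(\<Sum>x\<in>GP ` P0 \<union> GQ ` Q0 \<union> GR ` R0. F x) = (\<Sum>x\<in>GP ` P0 \<union> GQ ` Q0. F x) + (\<Sum>x\<in>GR ` R0. F x)"
    by (rule sum.union_disjoint) (use fA in auto)
  also have "(\<Sum>x\<in>GP ` P0 \<union> GQ ` Q0. F x) = (\<Sum>x\<in>GP ` P0. F x) + (\<Sum>x\<in>GQ ` Q0. F x)"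
    by (rule sum.union_disjoint) (use fA in auto)
  also have "(\<Sum>x\<in>GP ` P0. F x) = (\<Sum>a\<in>P0. F (GP a))" by (rule sum.reindex_cong[of GP]) (auto simp: inj_on_def)
  also have "(\<Sum>x\<in>GQ ` Q0. F x) = (\<Sum>a\<in>Q0. F (GQ a))" by (rule sum.reindex_cong[of GQ]) (auto simp: inj_on_def)
  also have "(\<Sum>x\<in>GR ` R0. F x) = (\<Sum>a\<in>R0. F (GR a))" by (rule sum.reindex_cong[of GR]) (auto simp: inj_on_def)
  finally show ?thesis by simp
qed

lemma sumR: "(\<Sum>s\<in>RR. F s) = (\<Sum>s\<in>R0. F s) + F tR"
  using sum.remove[OF finR tops(3), of F] by (simp add: add.commute)

lemma GGtop: "{s\<in>GG. leG s GTop} = GG" by simp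

lemma muG_top:
  assumes r: "r \<in> R0"
  shows "mobius GG leG (GR r) GTop
    = mobius PP (\<subseteq>) (phiP r) tP + mobius QQ (\<subseteq>) (phiQ r) tQ + mobius RR (\<subseteq>) r tR"
proof -
  have rR: "r \<in> RR" "r \<noteq> tR" using r by auto
  have gr: "GR r \<in> GG" using r by (simp add: GG_mem)
  have z1: "(\<Sum>x\<in>GG. mobius GG leG (GR r) x) = 0"
    using mobius_sum_zero[OF finG poG gr GG_mem(4), of] unfolding GGtop by simp
  have aP: "mobius GG leG (GR r) (GP a) = mobius PP (\<subseteq>) (phiP r) a" if "a \<in> P0" for a
    using transGP[OF r, of "GP a"] that by (simp add: GG_mem)
  have aQ: "mobius GG leG (GR r) (GQ a) = mobius QQ (\<subseteq>) (phiQ r) a" if "a \<in> Q0" for a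
    using transGQ[OF r, of "GQ a"] that by (simp add: GG_mem)
  have aR: "mobius GG leG (GR r) (GR s) = mobius RR (\<subseteq>) r s" if "s \<in> R0" for s
    using transGP[OF r, of "GR s"] transRP[OF rR(1), of s] that by (simp add: GG_mem)
  have e1: "(\<Sum>a\<in>P0. mobius PP (\<subseteq>) (phiP r) a) + (\<Sum>b\<in>Q0. mobius QQ (\<subseteq>) (phiQ r) b)
      + (\<Sum>s\<in>R0. mobius RR (\<subseteq>) r s) + mobius GG leG (GR r) GTop = 0"
    using z1 unfolding sumG by (simp add: aP aQ aR)
  have zR: "(\<Sum>s\<in>RR. mobius RR (\<subseteq>) r s) = 0"
  proof -
    have "{s\<in>RR. s \<subseteq> tR} = RR" using tops(6) by blast
    then show ?thesis using mobius_sum_zero[OF finR po_subset rR(1) tops(3) _ rR(2)] tops(6) rR(1) by simp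
  qed
  have zP: "(\<Sum>b\<in>PP. mobius PP (\<subseteq>) (phiP r) b) = 0"
  proof -
    have "{s\<in>PP. s \<subseteq> tP} = PP" using tops(4) by blast
    then show ?thesis using mobius_sum_zero[OF finP po_subset _ tops(1) _ phiP_ne_top[OF rR(1)]]
        phiP_facts(3) tops(4) rR(1) by simp
  qed
  have zQ: "(\<Sum>b\<in>QQ. mobius QQ (\<subseteq>) (phiQ r) b) = 0"
  proof -
    have "{s\<in>QQ. s \<subseteq> tQ} = QQ" using tops(5) by blast
    then show ?thesis using mobius_sum_zero[OF finQ po_subset _ tops(2) _ phiQ_ne_top[OF rR(1)]]
        phiQ_facts(3) tops(5) rR(1) by simp
  qed
  have sP: "(\<Sum>s\<in>RR. mobius PP (\<subseteq>) (phiP r) (phiP s)) = 0"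
    using zR transRP[OF rR(1)] by simp
  have sQ: "(\<Sum>s\<in>RR. mobius QQ (\<subseteq>) (phiQ r) (phiQ s)) = 0"
    using zR transRQ[OF rR(1)] by simp
  have zP': "(\<Sum>a\<in>P0. mobius PP (\<subseteq>) (phiP r) a) + mobius PP (\<subseteq>) (phiP r) tP = 0"
    using zP sP unfolding sumP by simp
  have zQ': "(\<Sum>a\<in>Q0. mobius QQ (\<subseteq>) (phiQ r) a) + mobius QQ (\<subseteq>) (phiQ r) tQ = 0"
    using zQ sQ unfolding sumQ by simp
  have zR': "(\<Sum>s\<in>R0. mobius RR (\<subseteq>) r s) + mobius RR (\<subseteq>) r tR = 0"
    using zR unfolding sumR by simp
  show ?thesis using e1 zP' zQ' zR' by linarith
qed

abbreviation "mzG \<equiv> mobius_z GG leG (gl_rank d)"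
abbreviation "mzP \<equiv> mobius_z PP (\<subseteq>) face_rank"
abbreviation "mzQ \<equiv> mobius_z QQ (\<subseteq>) face_rank"
abbreviation "mzR \<equiv> mobius_z RR (\<subseteq>) face_rank"

lemma row_GR:
  assumes r: "r \<in> R0"
  shows "(\<Sum>x\<in>GG. mzG (GR r) x) = (\<Sum>q\<in>PP. mzP (phiP r) q) + (\<Sum>q\<in>QQ. mzQ (phiQ r) q)
     - (\<Sum>q\<in>RR. mzR r q) - mzR r tR + [:0, 1:] * mzR r tR"
proof -
  have rR: "r \<in> RR" "r \<noteq> tR" using r by auto
  have rkP: "face_rank (phiP r) = face_rank r" using rP rR by blast
  have rkQ: "face_rank (phiQ r) = face_rank r" using rQ rR by blast
  have g1: "mzG (GR r) (GP a) = mzP (phiP r) a" if "a \<in> P0" for a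
    using transGP[OF r, of "GP a"] that rkP by (simp add: GG_mem mobius_z_def)
  have g2: "mzG (GR r) (GQ a) = mzQ (phiQ r) a" if "a \<in> Q0" for a
    using transGQ[OF r, of "GQ a"] that rkQ by (simp add: GG_mem mobius_z_def)
  have g3: "mzG (GR r) (GR s) = mzR r s" if "s \<in> R0" for s
    using transGP[OF r, of "GR s"] transRP[OF rR(1), of s] that by (simp add: GG_mem mobius_z_def)
  have h1: "mzP (phiP r) (phiP s) = mzR r s" if "s \<in> RR" for s
    using transRP[OF rR(1) that] rP rkP that by (simp add: mobius_z_def)
  have h2: "mzQ (phiQ r) (phiQ s) = mzR r s" if "s \<in> RR" for s
    using transRQ[OF rR(1) that] rQ rkQ that by (simp add: mobius_z_def)
  define n where "n = nat (face_rank tR - face_rank r)"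
  have n1: "nat (int d - face_rank r) = Suc n"
    unfolding n_def using rankR rR(1) rank_tops(3) by auto
  have n2: "nat (face_rank tP - face_rank (phiP r)) = Suc n" using n1 rank_tops rkP by simp
  have n3: "nat (face_rank tQ - face_rank (phiQ r)) = Suc n" using n1 rank_tops rkQ by simp
  have g4: "mzG (GR r) GTop = mzP (phiP r) tP + mzQ (phiQ r) tQ + [:0, 1:] * mzR r tR"
  proof -
    have "mzG (GR r) GTop = monom (mobius PP (\<subseteq>) (phiP r) tP + mobius QQ (\<subseteq>) (phiQ r) tQ + mobius RR (\<subseteq>) r tR) (Suc n)"
      unfolding mobius_z_def muG_top[OF r] using n1 by simp
    also have "\<dots> = monom (mobius PP (\<subseteq>) (phiP r) tP) (Suc n) + monom (mobius QQ (\<subseteq>) (phiQ r) tQ) (Suc n)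
        + monom (mobius RR (\<subseteq>) r tR) (Suc n)" by (simp add: add_monom)
    also have "monom (mobius RR (\<subseteq>) r tR) (Suc n) = [:0, 1:] * mzR r tR"
      unfolding mobius_z_def n_def by (rule monom_Suc_mult)
    finally show ?thesis unfolding mobius_z_def n2 n3 by simp
  qed
  have rowP: "(\<Sum>q\<in>PP. mzP (phiP r) q) = (\<Sum>a\<in>P0. mzP (phiP r) a) + ((\<Sum>s\<in>R0. mzR r s) + mzR r tR) + mzP (phiP r) tP"
    unfolding sumP sumR[symmetric] using h1 by simp
  have rowQ: "(\<Sum>q\<in>QQ. mzQ (phiQ r) q) = (\<Sum>a\<in>Q0. mzQ (phiQ r) a) + ((\<Sum>s\<in>R0. mzR r s) + mzR r tR) + mzQ (phiQ r) tQ"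
    unfolding sumQ sumR[symmetric] using h2 by simp
  have rowR: "(\<Sum>q\<in>RR. mzR r q) = (\<Sum>s\<in>R0. mzR r s) + mzR r tR" by (rule sumR)
  have LHS: "(\<Sum>x\<in>GG. mzG (GR r) x) = (\<Sum>a\<in>P0. mzP (phiP r) a) + (\<Sum>b\<in>Q0. mzQ (phiQ r) b)
      + (\<Sum>s\<in>R0. mzR r s) + (mzP (phiP r) tP + mzQ (phiQ r) tQ + [:0, 1:] * mzR r tR)"
    unfolding sumG g4 using g1 g2 g3 by simp
  show ?thesis unfolding LHS rowP rowQ rowR by (simp add: algebra_simps)
qed

lemma topR: "top_poly RR (\<subseteq>) face_rank (int d - 1) = (\<Sum>p\<in>RR. mzR p tR)"
proof -
  have S: "{(p,q). p \<in> RR \<and> q \<in> RR \<and> p \<subseteq> q \<and> face_rank p \<le> int d - 1 \<and> int d - 1 \<le> face_rank q}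
      = (\<lambda>p. (p, tR)) ` RR"
  proof
    show "{(p,q). p \<in> RR \<and> q \<in> RR \<and> p \<subseteq> q \<and> face_rank p \<le> int d - 1 \<and> int d - 1 \<le> face_rank q}
      \<subseteq> (\<lambda>p. (p, tR)) ` RR"
    proof
      fix pq assume "pq \<in> {(p,q). p \<in> RR \<and> q \<in> RR \<and> p \<subseteq> q \<and> face_rank p \<le> int d - 1 \<and> int d - 1 \<le> face_rank q}"
      then obtain p q where pq: "pq = (p,q)" "p \<in> RR" "q \<in> RR" "int d - 1 \<le> face_rank q" by blast
      have "q = tR" using rankR_lt[OF pq(3)] pq(4) by force
      then show "pq \<in> (\<lambda>p. (p, tR)) ` RR" using pq by blast
    qed
    show "(\<lambda>p. (p, tR)) ` RR \<subseteq> {(p,q). p \<in> RR \<and> q \<in> RR \<and> p \<subseteq> q \<and> face_rank p \<le> int d - 1 \<and> int d - 1 \<le> face_rank q}"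
      using tops(3,6) rankR rank_tops(3) by auto
  qed
  have "top_poly RR (\<subseteq>) face_rank (int d - 1) = (\<Sum>(p,q)\<in>(\<lambda>p. (p, tR)) ` RR. mzR p q)"
    unfolding top_poly_def S ..
  also have "\<dots> = (\<Sum>p\<in>RR. mzR p tR)"
    by (subst sum.reindex) (auto simp: inj_on_def)
  finally show ?thesis .
qed

lemma rowGTop: "(\<Sum>q\<in>GG. mzG GTop q) = 1"
proof (rule row_top[OF finG poG GG_mem(4)])
  show "\<forall>q\<in>GG. leG GTop q \<longrightarrow> q = GTop"
  proof (intro ballI impI)
    fix q assume "leG GTop q" then show "q = GTop" by (cases q) simp_all
  qed
qed

lemma rowtR: "(\<Sum>q\<in>RR. mzR tR q) = 1"
  by (rule row_top[OF finR po_subset tops(3)]) (use tops(6) in blast)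

lemma mzR_tt: "mzR tR tR = 1"
  unfolding mobius_z_def using mobius_refl[OF finR po_subset tops(3)] by simp

lemma main:
  "mobius_poly GG leG (gl_rank d)
       = mobius_poly PP (\<subseteq>) face_rank
         + mobius_poly QQ (\<subseteq>) face_rank
         - mobius_poly RR (\<subseteq>) face_rank
         - 1 + [:0, 1:]
         - [:1, -1:] * top_poly RR (\<subseteq>) face_rank (int d - 1)"
proof -
  have MG: "mobius_poly GG leG (gl_rank d) = (\<Sum>a\<in>P0. (\<Sum>q\<in>PP. mzP a q)) + (\<Sum>b\<in>Q0. (\<Sum>q\<in>QQ. mzQ b q))
      + (\<Sum>s\<in>R0. (\<Sum>q\<in>PP. mzP (phiP s) q) + (\<Sum>q\<in>QQ. mzQ (phiQ s) q)
          - (\<Sum>q\<in>RR. mzR s q) - mzR s tR + [:0, 1:] * mzR s tR) + 1"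
  proof -
    have "mobius_poly GG leG (gl_rank d) = (\<Sum>x\<in>GG. \<Sum>q\<in>GG. mzG x q)" by (rule mobius_poly_rows[OF finG poG])
    also have "\<dots> = (\<Sum>a\<in>P0. \<Sum>q\<in>GG. mzG (GP a) q) + (\<Sum>b\<in>Q0. \<Sum>q\<in>GG. mzG (GQ b) q)
        + (\<Sum>s\<in>R0. \<Sum>q\<in>GG. mzG (GR s) q) + (\<Sum>q\<in>GG. mzG GTop q)" by (rule sumG)
    also have "(\<Sum>a\<in>P0. \<Sum>q\<in>GG. mzG (GP a) q) = (\<Sum>a\<in>P0. (\<Sum>q\<in>PP. mzP a q))"
      by (rule sum.cong[OF refl]) (rule rowGP)
    also have "(\<Sum>b\<in>Q0. \<Sum>q\<in>GG. mzG (GQ b) q) = (\<Sum>b\<in>Q0. (\<Sum>q\<in>QQ. mzQ b q))"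
      by (rule sum.cong[OF refl]) (rule rowGQ)
    also have "(\<Sum>s\<in>R0. \<Sum>q\<in>GG. mzG (GR s) q) = (\<Sum>s\<in>R0. (\<Sum>q\<in>PP. mzP (phiP s) q) + (\<Sum>q\<in>QQ. mzQ (phiQ s) q)
          - (\<Sum>q\<in>RR. mzR s q) - mzR s tR + [:0, 1:] * mzR s tR)"
      by (rule sum.cong[OF refl]) (rule row_GR)
    finally show ?thesis unfolding rowGTop .
  qed
  have MP: "mobius_poly PP (\<subseteq>) face_rank = (\<Sum>a\<in>P0. (\<Sum>q\<in>PP. mzP a q))
      + (\<Sum>s\<in>R0. (\<Sum>q\<in>PP. mzP (phiP s) q)) + [:1, -1:] + 1"
  proof -
    have "mobius_poly PP (\<subseteq>) face_rank = (\<Sum>b\<in>PP. \<Sum>q\<in>PP. mzP b q)" by (rule mobius_poly_rows[OF finP po_subset])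
    also have "\<dots> = (\<Sum>a\<in>P0. \<Sum>q\<in>PP. mzP a q) + (\<Sum>s\<in>RR. \<Sum>q\<in>PP. mzP (phiP s) q) + (\<Sum>q\<in>PP. mzP tP q)"
      by (rule sumP)
    also have "(\<Sum>s\<in>RR. \<Sum>q\<in>PP. mzP (phiP s) q) = (\<Sum>s\<in>R0. \<Sum>q\<in>PP. mzP (phiP s) q) + (\<Sum>q\<in>PP. mzP (phiP tR) q)"
      by (rule sumR)
    finally show ?thesis unfolding phiP_top rowFP rowtP by (simp add: add.assoc)
  qed
  have MQ: "mobius_poly QQ (\<subseteq>) face_rank = (\<Sum>a\<in>Q0. (\<Sum>q\<in>QQ. mzQ a q))
      + (\<Sum>s\<in>R0. (\<Sum>q\<in>QQ. mzQ (phiQ s) q)) + [:1, -1:] + 1"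
  proof -
    have "mobius_poly QQ (\<subseteq>) face_rank = (\<Sum>b\<in>QQ. \<Sum>q\<in>QQ. mzQ b q)" by (rule mobius_poly_rows[OF finQ po_subset])
    also have "\<dots> = (\<Sum>a\<in>Q0. \<Sum>q\<in>QQ. mzQ a q) + (\<Sum>s\<in>RR. \<Sum>q\<in>QQ. mzQ (phiQ s) q) + (\<Sum>q\<in>QQ. mzQ tQ q)"
      by (rule sumQ)
    also have "(\<Sum>s\<in>RR. \<Sum>q\<in>QQ. mzQ (phiQ s) q) = (\<Sum>s\<in>R0. \<Sum>q\<in>QQ. mzQ (phiQ s) q) + (\<Sum>q\<in>QQ. mzQ (phiQ tR) q)"
      by (rule sumR)
    finally show ?thesis unfolding phiQ_top rowFQ rowtQ by (simp add: add.assoc)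
  qed
  have MR: "mobius_poly RR (\<subseteq>) face_rank = (\<Sum>s\<in>R0. (\<Sum>q\<in>RR. mzR s q)) + 1"
  proof -
    have "mobius_poly RR (\<subseteq>) face_rank = (\<Sum>b\<in>RR. \<Sum>q\<in>RR. mzR b q)" by (rule mobius_poly_rows[OF finR po_subset])
    also have "\<dots> = (\<Sum>s\<in>R0. \<Sum>q\<in>RR. mzR s q) + (\<Sum>q\<in>RR. mzR tR q)" by (rule sumR)
    finally show ?thesis unfolding rowtR .
  qed
  have TR: "top_poly RR (\<subseteq>) face_rank (int d - 1) = (\<Sum>s\<in>R0. mzR s tR) + 1"
  proof -
    have "(\<Sum>p\<in>RR. mzR p tR) = (\<Sum>s\<in>R0. mzR s tR) + mzR tR tR" by (rule sumR)
    then show ?thesis unfolding topR mzR_tt .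
  qed
  show ?thesis unfolding MG MP MQ MR TR poly_1m
    by (simp add: sum.distrib sum_subtractf sum_distrib_left algebra_simps numeral_poly)
qed

end


theorem mainTheorem11:
  fixes KP :: "'a::euclidean_space set" and KQ :: "'b::euclidean_space set"
    and KR :: "'c::euclidean_space set" and d :: nat
    and FP :: "'a set" and FQ :: "'b set"
    and phiP :: "'c set \<Rightarrow> 'a set" and phiQ :: "'c set \<Rightarrow> 'b set"
  assumes "polytope KP" and "aff_dim KP = int d"
    and "polytope KQ" and "aff_dim KQ = int d"
    and "polytope KR" and "aff_dim KR = int d - 1"
    and "FP \<in> face_poset KP" and "face_rank FP = int d - 1"
    and "FQ \<in> face_poset KQ" and "face_rank FQ = int d - 1"
    and "bij_betw phiP (face_poset KR) {s \<in> face_poset KP. s \<subseteq> FP}"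
    and "\<forall>r\<in>face_poset KR. \<forall>s\<in>face_poset KR. (phiP r \<subseteq> phiP s) = (r \<subseteq> s)"
    and "\<forall>r\<in>face_poset KR. face_rank (phiP r) = face_rank r"
    and "bij_betw phiQ (face_poset KR) {s \<in> face_poset KQ. s \<subseteq> FQ}"
    and "\<forall>r\<in>face_poset KR. \<forall>s\<in>face_poset KR. (phiQ r \<subseteq> phiQ s) = (r \<subseteq> s)"
    and "\<forall>r\<in>face_poset KR. face_rank (phiQ r) = face_rank r"
  shows "mobius_poly
           (gl_carrier (face_poset KP) (face_poset KQ) (face_poset KR) FP FQ
              (vertex_set KP) (vertex_set KQ) (vertex_set KR))
           (gl_le phiP phiQ) (gl_rank d)
       = mobius_poly (face_poset KP) (\<subseteq>) face_rank
         + mobius_poly (face_poset KQ) (\<subseteq>) face_rank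
         - mobius_poly (face_poset KR) (\<subseteq>) face_rank
         - 1 + [:0, 1:]
         - [:1, -1:] * top_poly (face_poset KR) (\<subseteq>) face_rank (int d - 1)"
proof -
  interpret g: glue KP KQ KR d FP FQ phiP phiQ
    using assms by (intro glue.intro) assumption+
  show ?thesis by (rule g.main)
qed

end
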